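(* In a strategic game in the setting described in the context, let Assumption SAV be satisfied. Then for all $s,t\in\mathcal{S}$ with $s\neq t$ we have $s_i\neq t_i$ for every $i=1,2,\dots,n$.
   Context: Setting: there are $n\ge 2$ players and a measurable space $(\Omega,\mathcal{F})$. Each player $i$ has a prior $p_i$, an action set $A_i\subseteq\mathbb{R}$ with $|A_i|>1$, and a finite private information partition $\mathcal{I}_i$ of $\Omega$. The priors are equivalent (same null sets), and strategies agreeing up to null events are identified. A strategy of player $i$ is a $\sigma(\mathcal{I}_i)$-measurable function $s_i:\Omega\to A_i$, and player $i$ may apply any such function. For each strategy $s_i$, player $i$ has a unique conjecture $\Psi_i(s_i)$ about the $(n-1)$-tuple of strategies of the other players. The set of Savage acts available to player $i$ is the graph $\mathcal{S}_i=\{(s_i,\Psi_i(s_i)) : s_i \text{ a strategy of player } i\}$, viewed as a set of strategy tuples $s=(s_1,\dots,s_n)$. Under SAV these graphs coincide, $\mathcal{S}_1=\cdots=\mathcal{S}_n$, and $\mathcal{S}$ denotes this common set. Assumption SAV (strategic certainty): for every player $i$ and every strategy $s_i$, $\Psi_i(s_i)$ equals the true tuple of strategies the other players apply in response to $s_i$. *)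

theory Defs
  imports "HOL-Probability.Probability"
begin

(* Players are 0,...,n-1.  A strategy is a real-valued function on the state space;
   a strategy tuple (profile) is a function nat => ('w => real), only components < n matter.
   Null sets: all priors are equivalent, so we use the prior p 0 of player 0 as reference. *)

definition is_info_partition :: "'w set \<Rightarrow> 'w set set \<Rightarrow> bool" where
  "is_info_partition \<Omega> P \<longleftrightarrow>
     finite P \<and> \<Union>P = \<Omega> \<and> (\<forall>B\<in>P. B \<noteq> {}) \<and> disjoint P"

definition strategy :: "'w measure \<Rightarrow> 'w set set \<Rightarrow> real set \<Rightarrow> ('w \<Rightarrow> real) \<Rightarrow> bool" where
  "strategy M P A f \<longleftrightarrow>
     f \<in> borel_measurable (sigma (space M) P) \<and> (\<forall>\<omega>\<in>space M. f \<omega> \<in> A)"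

definition ident :: "'w measure \<Rightarrow> ('w \<Rightarrow> real) \<Rightarrow> ('w \<Rightarrow> real) \<Rightarrow> bool" where
  "ident M f g \<longleftrightarrow> (AE \<omega> in M. f \<omega> = g \<omega>)"

definition prof_ident :: "'w measure \<Rightarrow> nat \<Rightarrow> (nat \<Rightarrow> 'w \<Rightarrow> real) \<Rightarrow> (nat \<Rightarrow> 'w \<Rightarrow> real) \<Rightarrow> bool" where
  "prof_ident M n s t \<longleftrightarrow> (\<forall>i<n. ident M (s i) (t i))"

(* The setting: n >= 2 players, equivalent priors p i on a common measurable space,
   action sets A i (subsets of R) with more than one element, finite information
   partitions I i, and conjectures Psi i: Psi i x j is player i's conjecture (given own
   strategy x) about the strategy of player j /= i; conjectures are strategies and are
   well defined on identified strategies (unique conjecture per strategy). *)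
definition game_setting ::
  "nat \<Rightarrow> (nat \<Rightarrow> 'w measure) \<Rightarrow> (nat \<Rightarrow> real set) \<Rightarrow> (nat \<Rightarrow> 'w set set)
   \<Rightarrow> (nat \<Rightarrow> ('w \<Rightarrow> real) \<Rightarrow> nat \<Rightarrow> 'w \<Rightarrow> real) \<Rightarrow> bool" where
  "game_setting n p A I \<Psi> \<longleftrightarrow>
     n \<ge> 2 \<and>
     (\<forall>i<n. prob_space (p i) \<and> sets (p i) = sets (p 0)) \<and>
     (\<forall>i<n. \<forall>j<n. null_sets (p i) = null_sets (p j)) \<and>
     (\<forall>i<n. \<exists>a b. a \<in> A i \<and> b \<in> A i \<and> a \<noteq> b) \<and>
     (\<forall>i<n. is_info_partition (space (p 0)) (I i)) \<and>
     (\<forall>i<n. \<forall>x. strategy (p 0) (I i) (A i) x \<longrightarrow>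
        (\<forall>j<n. j \<noteq> i \<longrightarrow> strategy (p 0) (I j) (A j) (\<Psi> i x j))) \<and>
     (\<forall>i<n. \<forall>x y. strategy (p 0) (I i) (A i) x \<longrightarrow> strategy (p 0) (I i) (A i) y \<longrightarrow>
        ident (p 0) x y \<longrightarrow> (\<forall>j<n. j \<noteq> i \<longrightarrow> ident (p 0) (\<Psi> i x j) (\<Psi> i y j)))"

(* Savage acts of player i: the graph {(x, Psi i x)} (as set of strategy tuples, closed
   under identification up to null events) *)
definition savage_acts ::
  "nat \<Rightarrow> (nat \<Rightarrow> 'w measure) \<Rightarrow> (nat \<Rightarrow> real set) \<Rightarrow> (nat \<Rightarrow> 'w set set)
   \<Rightarrow> (nat \<Rightarrow> ('w \<Rightarrow> real) \<Rightarrow> nat \<Rightarrow> 'w \<Rightarrow> real) \<Rightarrow> nat \<Rightarrow> (nat \<Rightarrow> 'w \<Rightarrow> real) set" where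
  "savage_acts n p A I \<Psi> i =
     {s. \<exists>x. strategy (p 0) (I i) (A i) x \<and> ident (p 0) (s i) x \<and>
           (\<forall>j<n. j \<noteq> i \<longrightarrow> ident (p 0) (s j) (\<Psi> i x j))}"

(* Assumption SAV: R i x j is the strategy player j truly applies in response to player i
   applying x; every conjecture equals the true response. *)
definition SAV ::
  "nat \<Rightarrow> (nat \<Rightarrow> 'w measure) \<Rightarrow> (nat \<Rightarrow> real set) \<Rightarrow> (nat \<Rightarrow> 'w set set)
   \<Rightarrow> (nat \<Rightarrow> ('w \<Rightarrow> real) \<Rightarrow> nat \<Rightarrow> 'w \<Rightarrow> real)
   \<Rightarrow> (nat \<Rightarrow> ('w \<Rightarrow> real) \<Rightarrow> nat \<Rightarrow> 'w \<Rightarrow> real) \<Rightarrow> bool" where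
  "SAV n p A I \<Psi> R \<longleftrightarrow>
     (\<forall>i<n. \<forall>x. strategy (p 0) (I i) (A i) x \<longrightarrow>
        (\<forall>j<n. j \<noteq> i \<longrightarrow> ident (p 0) (\<Psi> i x j) (R i x j)))"

end

theory Submission
  imports Defs
begin

lemma ident_trans: "ident M f g \<Longrightarrow> ident M g h \<Longrightarrow> ident M f h"
  unfolding ident_def by (erule AE_mp, erule AE_mp) auto

lemma ident_sym: "ident M f g \<Longrightarrow> ident M g f"
  unfolding ident_def by (erule AE_mp) auto

theorem theorem4:
  fixes n :: nat and p :: "nat \<Rightarrow> 'w measure" and A :: "nat \<Rightarrow> real set"
    and I :: "nat \<Rightarrow> 'w set set" and \<Psi> R :: "nat \<Rightarrow> ('w \<Rightarrow> real) \<Rightarrow> nat \<Rightarrow> 'w \<Rightarrow> real"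
    and S :: "(nat \<Rightarrow> 'w \<Rightarrow> real) set"
  assumes game: "game_setting n p A I \<Psi>"
    and sav: "SAV n p A I \<Psi> R"
    and coincide: "\<forall>i<n. \<forall>j<n. savage_acts n p A I \<Psi> i = savage_acts n p A I \<Psi> j"
    and S_def: "S = savage_acts n p A I \<Psi> 0"
    and s: "s \<in> S" and t: "t \<in> S"
    and neq: "\<not> prof_ident (p 0) n s t"
  shows "\<forall>i<n. \<not> ident (p 0) (s i) (t i)"
proof (intro allI impI notI)
  fix i assume i: "i < n" and st: "ident (p 0) (s i) (t i)"
  have n0: "0 < n" using i by simp
  have SS: "S = savage_acts n p A I \<Psi> i" proof -
    have "savage_acts n p A I \<Psi> 0 = savage_acts n p A I \<Psi> i"
      using spec[OF coincide, of 0] n0 i by (meson)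
    then show ?thesis using S_def by (rule trans[rotated])
  qed
  obtain x where x: "strategy (p 0) (I i) (A i) x" "ident (p 0) (s i) x"
     "\<forall>j<n. j \<noteq> i \<longrightarrow> ident (p 0) (s j) (\<Psi> i x j)"
    using s SS unfolding savage_acts_def by auto
  obtain y where y: "strategy (p 0) (I i) (A i) y" "ident (p 0) (t i) y"
     "\<forall>j<n. j \<noteq> i \<longrightarrow> ident (p 0) (t j) (\<Psi> i y j)"
    using t SS unfolding savage_acts_def by auto
  have xy: "ident (p 0) x y"
    using ident_trans[OF ident_sym[OF x(2)] ident_trans[OF st y(2)]] .
  have psi: "\<forall>j<n. j \<noteq> i \<longrightarrow> ident (p 0) (\<Psi> i x j) (\<Psi> i y j)"
  proof -
    have "\<forall>i<n. \<forall>x y. strategy (p 0) (I i) (A i) x \<longrightarrow> strategy (p 0) (I i) (A i) y \<longrightarrow>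
        ident (p 0) x y \<longrightarrow> (\<forall>j<n. j \<noteq> i \<longrightarrow> ident (p 0) (\<Psi> i x j) (\<Psi> i y j))"
      using game unfolding game_setting_def by (elim conjE) assumption
    then show ?thesis using i x(1) y(1) xy by simp
  qed
  have "prof_ident (p 0) n s t"
    unfolding prof_ident_def
  proof (intro allI impI)
    fix j assume j: "j < n"
    show "ident (p 0) (s j) (t j)"
    proof (cases "j = i")
      case True then show ?thesis using st by simp
    next
      case False
      have a: "ident (p 0) (s j) (\<Psi> i x j)" using x(3) j False by simp
      have b: "ident (p 0) (t j) (\<Psi> i y j)" using y(3) j False by simp
      have c: "ident (p 0) (\<Psi> i x j) (\<Psi> i y j)" using psi j False by simp
      show ?thesis using ident_trans[OF a ident_trans[OF c ident_sym[OF b]]] .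
    qed
  qed
  then show False using neq by simp
qed

end
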